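(* Let $f(z)=z+\sum_{k=2}^{\infty}a_kz^k$ be analytic in $\mathbb{D}=\{z:|z|<1\}$ with $zf'(z)-f(z)=\frac12 z^2\phi(z)$ for all $z\in\mathbb{D}$, where $\phi$ is analytic in $\mathbb{D}$ and $|\phi(z)|\le1$. Let $r_{\mathcal S^*}$ denote the positive root (in $(0,1)$) of \[3(1-r)(2-r)\ln(1-r)+4-4r-3r^2+2r^3=0.\] Then for every $n\ge2$ the partial sum $s_n(z;f)=z+\sum_{k=2}^n a_kz^k$ is starlike in the disk $|z|<r_{\mathcal S^*}$.
   Context: A normalized analytic function $g$ is starlike in a disk $|z|<\rho$ if it maps it conformally onto a domain starlike with respect to $0$; equivalently $\mathrm{Re}(zg'(z)/g(z))>0$ for $0<|z|<\rho$. *)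

theory Defs
  imports "HOL-Complex_Analysis.Complex_Analysis"
begin

definition rS_eq :: "real \<Rightarrow> real" where
  "rS_eq r = 3 * (1 - r) * (2 - r) * ln (1 - r) + 4 - 4*r - 3*r^2 + 2*r^3"

text \<open>The root of rS_eq in (0,1) (it is unique).\<close>
definition r_starlike :: real where
  "r_starlike = (THE r. 0 < r \<and> r < 1 \<and> rS_eq r = 0)"

definition starlike_in_disk :: "(complex \<Rightarrow> complex) \<Rightarrow> real \<Rightarrow> bool" where
  "starlike_in_disk g \<rho> \<longleftrightarrow>
     (\<forall>z. 0 < norm z \<and> norm z < \<rho> \<longrightarrow> g z \<noteq> 0 \<and> Re (z * deriv g z / g z) > 0)"

end

theory Submission
  imports Defs "HOL-Analysis.Harmonic_Numbers"
begin


definition uS :: "real \<Rightarrow> real" where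
  "uS r = 3 * ln (1 - r) + 2*r + 3 - 1/(1-r)"

lemma rS_eq_uS: "r < 1 \<Longrightarrow> rS_eq r = (1-r)*(2-r)*uS r"
  unfolding rS_eq_def uS_def by (simp add: field_simps power2_eq_square power3_eq_cube)

lemma uS_deriv: "x < 1 \<Longrightarrow> DERIV uS x :> (-3/(1-x) + 2 - 1/(1-x)^2)"
  unfolding uS_def
  by (rule derivative_eq_intros refl | simp)+ (auto simp: field_simps power2_eq_square)

lemma uS_decr: assumes "0 \<le> a" "a < b" "b < 1" shows "uS b < uS a"
proof (rule DERIV_neg_imp_decreasing[OF assms(2)])
  fix x assume x: "a \<le> x" "x \<le> b"
  hence x1: "x < 1" "0 \<le> x" using assms by auto
  have "1 \<le> 1/(1-x)" using x1 by (simp add: field_simps)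
  moreover have "0 < 1/(1-x)^2" using x1 by simp
  ultimately have "-3/(1-x) + 2 - 1/(1-x)^2 < 0" by linarith
  thus "\<exists>y. DERIV uS x :> y \<and> y < 0" using uS_deriv[OF x1(1)] by blast
qed

lemma uS_cont: "x < 1 \<Longrightarrow> isCont uS x"
  unfolding uS_def by (intro continuous_intros) auto

lemma r_starlike: "0 < r_starlike \<and> r_starlike \<le> 1/2"
proof -
  have "uS (1/2) \<le> 0" using ln2_ge_two_thirds by (simp add: uS_def ln_div)
  moreover have "0 \<le> uS 0" by (simp add: uS_def)
  ultimately obtain x where x: "0 \<le> x" "x \<le> 1/2" "uS x = 0"
    using IVT2[of uS "1/2" 0 0] uS_cont by auto
  have x0: "x \<noteq> 0" using x by (auto simp: uS_def)
  have uniq: "y = x" if "0 < y" "y < 1" "rS_eq y = 0" for y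
  proof -
    have "uS y = 0" using that rS_eq_uS[of y] by simp
    thus ?thesis using uS_decr[of x y] uS_decr[of y x] x that
      by (cases "x < y"; cases "y < x") auto
  qed
  have "rS_eq x = 0" using x rS_eq_uS[of x] by simp
  hence "r_starlike = x" unfolding r_starlike_def
    using x x0 uniq by (intro the_equality) auto
  thus ?thesis using x x0 by auto
qed


lemma coef_bound:
  fixes f \<phi> :: "complex \<Rightarrow> complex" and a :: "nat \<Rightarrow> complex"
  assumes f_ser: "\<And>z. z \<in> ball 0 1 \<Longrightarrow> (\<lambda>k. a k * z ^ k) sums f z"
    and phi_holo: "\<phi> holomorphic_on ball 0 1"
    and phi_bd: "\<And>z. z \<in> ball 0 1 \<Longrightarrow> norm (\<phi> z) \<le> 1"
    and eq: "\<And>z. z \<in> ball 0 1 \<Longrightarrow> z * deriv f z - f z = 1/2 * z^2 * \<phi> z"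
  shows "norm (a (j+2)) * (real j + 1) \<le> 1/2"
proof -
  define A where "A = Abs_fps a"
  define \<Phi> where "\<Phi> = fps_expansion \<phi> 0"
  have ev: "eventually (\<lambda>z. z \<in> ball 0 1) (nhds (0::complex))"
    by (rule eventually_nhds_in_open) auto
  have fA: "f has_fps_expansion A"
    unfolding A_def by (rule has_fps_expansionI) (use ev f_ser in \<open>auto elim: eventually_mono\<close>)
  have H1: "(\<lambda>z. z * deriv f z - f z) has_fps_expansion (fps_X * fps_deriv A - A)"
    by (intro has_fps_expansion_diff has_fps_expansion_mult has_fps_expansion_deriv fA has_fps_expansion_fps_X)
  have pF: "\<phi> has_fps_expansion \<Phi>"
    unfolding \<Phi>_def by (rule has_fps_expansion_fps_expansion[OF _ _ phi_holo]) auto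
  have H2: "(\<lambda>z. 1/2 * z^2 * \<phi> z) has_fps_expansion (fps_const (1/2) * fps_X^2 * \<Phi>)"
    by (intro has_fps_expansion_mult has_fps_expansion_const has_fps_expansion_fps_X_power pF)
  have H3: "(\<lambda>z. z * deriv f z - f z) has_fps_expansion (fps_const (1/2) * fps_X^2 * \<Phi>)"
    using H2 by (subst has_fps_expansion_cong[OF _ refl]) (use ev eq in \<open>auto elim: eventually_mono\<close>)
  have E: "fps_X * fps_deriv A - A = fps_const (1/2) * fps_X^2 * \<Phi>"
    using fps_expansion_unique_complex[OF H1 H3] .
  have "(fps_X * fps_deriv A - A) $ (j+2) = (fps_const (1/2) * fps_X^2 * \<Phi>) $ (j+2)"
    using E by simp
  hence "of_nat (j+2) * a (j+2) - a (j+2) = 1/2 * \<Phi> $ j"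
    by (simp add: A_def mult.assoc fps_X_power_mult_nth)
  hence aeq: "a (j+2) * (of_nat j + 1) = 1/2 * \<Phi> $ j"
    by (simp add: algebra_simps)
  have bnd: "norm (\<Phi> $ j) \<le> 1 / \<rho>^j" if "0 < \<rho>" "\<rho> < 1" for \<rho> :: real
  proof -
    have "norm ((deriv ^^ j) \<phi> 0) \<le> fact j * 1 / \<rho>^j"
    proof (rule Cauchy_inequality)
      show "\<phi> holomorphic_on ball 0 \<rho>" using that by (intro holomorphic_on_subset[OF phi_holo]) auto
      show "continuous_on (cball 0 \<rho>) \<phi>"
        using phi_holo that by (intro holomorphic_on_imp_continuous_on holomorphic_on_subset[OF phi_holo]) auto
      show "norm (\<phi> x) \<le> 1" if "norm (0 - x) = \<rho>" for x
        using that \<open>\<rho> < 1\<close> by (intro phi_bd) auto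
    qed fact
    moreover have "0 < \<rho>^j" using that by simp
    ultimately show ?thesis unfolding \<Phi>_def fps_expansion_def
      by (simp add: norm_divide divide_simps)
  qed
  have "norm (\<Phi> $ j) \<le> 1"
  proof (rule tendsto_le[of "at_left (1::real)"])
    show "((\<lambda>\<rho>::real. 1 / \<rho>^j) \<longlongrightarrow> 1) (at_left 1)"
    proof -
      have "isCont (\<lambda>\<rho>::real. 1 / \<rho>^j) 1" by (intro continuous_intros) auto
      hence "((\<lambda>\<rho>::real. 1 / \<rho>^j) \<longlongrightarrow> 1) (at 1)" by (simp add: isCont_def)
      thus ?thesis unfolding filterlim_at_split by blast
    qed
    show "((\<lambda>\<rho>. norm (\<Phi> $ j)) \<longlongrightarrow> norm (\<Phi> $ j)) (at_left 1)" by simp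
    show "eventually (\<lambda>\<rho>. norm (\<Phi> $ j) \<le> 1 / \<rho>^j) (at_left (1::real))"
      using eventually_at_left_real[of 0 1] by (auto elim!: eventually_mono intro: bnd)
  qed simp
  have "norm (a (j+2) * (of_nat j + 1)) = norm (a (j+2)) * (real j + 1)"
  proof -
    have "complex_of_nat j + 1 = of_nat (Suc j)" by simp
    hence "norm (complex_of_nat j + 1) = real j + 1" by (simp only: norm_of_nat)
    thus ?thesis by (simp add: norm_mult)
  qed
  moreover have "norm (a (j+2) * (of_nat j + 1)) = norm (\<Phi> $ j) / 2"
    unfolding aeq by (simp add: norm_mult)
  ultimately show ?thesis using \<open>norm (\<Phi> $ j) \<le> 1\<close> by linarith
qed


lemma geom_aux: "n \<ge> 1 \<Longrightarrow> (1 - r) * (\<Sum>k=2..n. r^(k-1)) = r - (r::real)^n"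
proof (induction n rule: dec_induct)
  case base then show ?case by simp
next
  case (step m)
  have "{2..Suc m} = insert (Suc m) {2..m}" using step by auto
  hence "(\<Sum>k=2..Suc m. r^(k-1)) = r^m + (\<Sum>k=2..m. r^(k-1))" by simp
  moreover have "(1 - r) * (r^m + (\<Sum>k=2..m. r^(k-1))) = (1 - r) * (\<Sum>k=2..m. r^(k-1)) + r^m - r * r^m"
    by (simp only: algebra_simps)
  ultimately show ?case using step.IH by simp
qed

lemma geom_lt: assumes "0 \<le> r" "r < 1/2" shows "(\<Sum>k=2..n. r^(k-1)) < (1::real)"
proof (cases "n \<ge> 1")
  case True
  have "(1 - r) * (\<Sum>k=2..n. r^(k-1)) = r - r^n" by (rule geom_aux[OF True])
  moreover have "0 \<le> r^n" using assms by simp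
  ultimately have "(1 - r) * (\<Sum>k=2..n. r^(k-1)) < 1 - r" using assms by linarith
  thus ?thesis using assms by (simp add: mult_less_cancel_left2 mult.commute)
next
  case False then show ?thesis by simp
qed

lemma starlike_core:
  fixes a :: "nat \<Rightarrow> complex" and z :: complex and n :: nat
  assumes ab: "\<And>k. k \<ge> 2 \<Longrightarrow> norm (a k) * (real k - 1) \<le> 1/2"
    and z: "0 < norm z" "norm z < 1/2"
  defines "s \<equiv> (\<lambda>z. z + (\<Sum>k=2..n. a k * z ^ k))"
  shows "s z \<noteq> 0 \<and> Re (z * deriv s z / s z) > 0"
proof -
  define r where "r = norm z"
  have r: "0 < r" "r < 1/2" using z r_def by auto
  have ka: "real k * norm (a k) \<le> 1" if "k \<in> {2..n}" for k
  proof -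
    have "real k \<le> 2 * (real k - 1)" using that by auto
    hence "real k * norm (a k) \<le> 2 * (real k - 1) * norm (a k)" by (simp add: mult_right_mono)
    also have "\<dots> \<le> 1" using ab[of k] that by (simp add: algebra_simps)
    finally show ?thesis .
  qed
  define T where "T = (\<Sum>k=2..n. real k * norm (a k) * r^(k-1))"
  have "T \<le> (\<Sum>k=2..n. r^(k-1))"
    unfolding T_def
    by (rule sum_mono) (use ka r in \<open>auto intro: mult_left_le_one_le[of "r^_", simplified mult.commute] mult_right_le_one_le\<close>)
  also have "\<dots> < 1" using geom_lt r by simp
  finally have T1: "T < 1" .
  define D where "D = (\<Sum>k=2..n. of_nat k * a k * z^k)"
  define E where "E = (\<Sum>k=2..n. a k * z^k)"
  have der: "(s has_field_derivative (1 + (\<Sum>k=2..n. a k * (of_nat k * z^(k-1))))) (at z)"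
    unfolding s_def by (rule derivative_eq_intros refl | simp)+ (intro sum.cong refl, simp add: mult_ac)
  have "z * deriv s z = z + D"
    unfolding DERIV_imp_deriv[OF der] D_def distrib_left sum_distrib_left
    by (intro arg_cong2[where f="(+)"] sum.cong refl) (auto simp: power_eq_if mult_ac)
  have sz: "s z = z + E" unfolding s_def E_def by simp
  have B1: "norm (D - E) \<le> (\<Sum>k=2..n. (real k - 1) * norm (a k) * r^k)"
  proof -
    have "D - E = (\<Sum>k=2..n. (of_nat k - 1) * a k * z^k)"
      unfolding D_def E_def by (simp add: sum_subtractf[symmetric] algebra_simps)
    also have "norm \<dots> \<le> (\<Sum>k=2..n. norm ((of_nat k - 1) * a k * z^k))" by (rule norm_sum)
    also have "\<dots> = (\<Sum>k=2..n. (real k - 1) * norm (a k) * r^k)"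
    proof (intro sum.cong refl)
      fix k assume k: "k \<in> {2..n}"
      have "(of_nat k - 1 :: complex) = of_real (real k - 1)" by simp
      hence "norm (of_nat k - 1 :: complex) = real k - 1" using k by (simp only: norm_of_real) simp
      thus "norm ((of_nat k - 1) * a k * z^k) = (real k - 1) * norm (a k) * r^k"
        by (simp add: norm_mult norm_power r_def)
    qed
    finally show ?thesis .
  qed
  have B2: "norm E \<le> (\<Sum>k=2..n. norm (a k) * r^k)"
    unfolding E_def r_def by (rule order_trans[OF norm_sum]) (simp add: norm_mult norm_power)
  have "(\<Sum>k=2..n. (real k - 1) * norm (a k) * r^k) + (\<Sum>k=2..n. norm (a k) * r^k) = r * T"
    unfolding T_def sum.distrib[symmetric] sum_distrib_left
    by (intro sum.cong refl) (auto simp: algebra_simps power_eq_if)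
  also have "\<dots> < r" using T1 r by simp
  finally have key: "norm (D - E) < r - norm E" using B1 B2 by linarith
  have nsz: "norm (s z) \<ge> r - norm E"
    unfolding sz r_def using norm_triangle_ineq2[of z "-E"] by simp
  have szne: "s z \<noteq> 0" using key nsz by (metis norm_ge_zero norm_zero order.strict_trans2 not_less)
  have q: "z * deriv s z / s z = 1 + (D - E) / s z"
    using szne \<open>z * deriv s z = z + D\<close> sz by (simp add: field_simps)
  have "norm ((D - E) / s z) < 1"
    using key nsz szne by (simp add: norm_divide divide_simps)
  hence "Re ((D - E) / s z) > -1" using abs_Re_le_cmod[of "(D - E) / s z"] by linarith
  hence "Re (z * deriv s z / s z) > 0" unfolding q by simp
  thus ?thesis using szne by simp
qed

theorem theorem2p2:
  fixes f \<phi> :: "complex \<Rightarrow> complex" and a :: "nat \<Rightarrow> complex" and n :: nat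
  assumes f_holo: "f holomorphic_on ball 0 1"
    and f_ser: "\<And>z. z \<in> ball 0 1 \<Longrightarrow> (\<lambda>k. a k * z ^ k) sums f z"
    and a0: "a 0 = 0" and a1: "a 1 = 1"
    and phi_holo: "\<phi> holomorphic_on ball 0 1"
    and phi_bd: "\<And>z. z \<in> ball 0 1 \<Longrightarrow> norm (\<phi> z) \<le> 1"
    and eq: "\<And>z. z \<in> ball 0 1 \<Longrightarrow> z * deriv f z - f z = 1/2 * z^2 * \<phi> z"
    and n: "n \<ge> 2"
  shows "starlike_in_disk (\<lambda>z. z + (\<Sum>k=2..n. a k * z ^ k)) r_starlike"
proof -
  have ab: "norm (a k) * (real k - 1) \<le> 1/2" if "k \<ge> 2" for k
  proof -
    define j where "j = k - 2"
    have j: "k = j + 2" using that unfolding j_def by simp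
    have "real k - 1 = real j + 1" using j by simp
    thus ?thesis using coef_bound[OF f_ser phi_holo phi_bd eq, of j] j by (simp add: add.commute)
  qed
  show ?thesis unfolding starlike_in_disk_def
  proof (intro allI impI)
    fix z :: complex assume z: "0 < norm z \<and> norm z < r_starlike"
    hence z2: "norm z < 1/2" using r_starlike by linarith
    have z1: "0 < norm z" using z by blast
    show "z + (\<Sum>k=2..n. a k * z ^ k) \<noteq> 0 \<and>
          0 < Re (z * deriv (\<lambda>z. z + (\<Sum>k=2..n. a k * z ^ k)) z / (z + (\<Sum>k=2..n. a k * z ^ k)))"
      by (rule starlike_core[OF ab z1 z2])
  qed
qed

end
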